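(* Let $k\ge1$. Conditional on the attack cycle starting with SS, the probability that it ends with exactly $k$ consecutive letters H is $pq^{k-1}$.
   Context: Honest hashrate $p$, attacker hashrate $q$, $p+q=1$, $0<q<p$. The attack cycles starting with SS are the words $SSwH$ over $\{S,H\}$ with $w$ a Dyck word (S up-step, H down-step: equally many S and H, every prefix with at least as many S as H), with $\mathbb{P}[SSwH]=q^2p(pq)^{|w|}$ where $|w|$ is half the length of $w$. *)

theory Defs
  imports "HOL-Analysis.Analysis"
begin

datatype letter = S | H

definition nS :: "letter list \<Rightarrow> nat" where "nS xs = length (filter (\<lambda>c. c = S) xs)"
definition nH :: "letter list \<Rightarrow> nat" where "nH xs = length (filter (\<lambda>c. c = H) xs)"

definition dyck :: "letter list \<Rightarrow> bool" where
  "dyck w \<longleftrightarrow> nS w = nH w \<and> (\<forall>i \<le> length w. nH (take i w) \<le> nS (take i w))"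

definition SS_cycles :: "letter list set" where
  "SS_cycles = {[S, S] @ w @ [H] | w. dyck w}"

text \<open>Probability of the cycle SSwH is q^2 p (pq)^|w|, |w| = half the length of w.
  For c = SSwH, length w = length c - 3.\<close>
definition cycle_prob :: "real \<Rightarrow> real \<Rightarrow> letter list \<Rightarrow> real" where
  "cycle_prob p q c = q^2 * p * (p * q) ^ ((length c - 3) div 2)"

definition final_H_run :: "letter list \<Rightarrow> nat" where
  "final_H_run c = length (takeWhile (\<lambda>x. x = H) (rev c))"

end

theory Submission
  imports Defs
begin

fun ok :: "int \<Rightarrow> int \<Rightarrow> letter list \<Rightarrow> bool" where
  "ok h e [] = (h = e)"
| "ok h e (S # xs) = ok (h + 1) e xs"
| "ok h e (H # xs) = (h > 0 \<and> ok (h - 1) e xs)"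

definition ht :: "letter list \<Rightarrow> int" where "ht xs = int (nS xs) - int (nH xs)"

lemma nS_simps[simp]: "nS [] = 0" "nS (S # xs) = Suc (nS xs)" "nS (H # xs) = nS xs"
  by (simp_all add: nS_def)
lemma nH_simps[simp]: "nH [] = 0" "nH (S # xs) = nH xs" "nH (H # xs) = Suc (nH xs)"
  by (simp_all add: nH_def)
lemma ht_simps[simp]: "ht [] = 0" "ht (S # xs) = ht xs + 1" "ht (H # xs) = ht xs - 1"
  by (simp_all add: ht_def)

lemma length_nS_nH: "length xs = nS xs + nH xs"
proof (induction xs)
  case (Cons a xs) then show ?case by (cases a) auto
qed simp

lemma ok_append: "ok h e (xs @ ys) = (\<exists>m. ok h m xs \<and> ok m e ys)"
proof (induction xs arbitrary: h)
  case (Cons a xs) then show ?case by (cases a) auto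
qed simp

lemma ok_ht: "ok h e xs \<Longrightarrow> e = h + ht xs"
proof (induction xs arbitrary: h)
  case (Cons a xs) then show ?case by (cases a) (use Cons.IH[of "h+1"] Cons.IH[of "h-1"] in \<open>auto simp: algebra_simps\<close>)
qed simp

lemma ok_nonneg: "ok h e xs \<Longrightarrow> 0 \<le> h \<Longrightarrow> 0 \<le> e"
proof (induction xs arbitrary: h)
  case (Cons a xs) then show ?case by (cases a) auto
qed simp

lemma ok_shift: "ok h e xs \<Longrightarrow> 0 \<le> c \<Longrightarrow> ok (h + c) (e + c) xs"
proof (induction xs arbitrary: h)
  case (Cons a xs) then show ?case by (cases a) (use Cons.IH[of "h+1"] Cons.IH[of "h-1"] in \<open>auto simp: algebra_simps\<close>)
qed simp

lemma all_le_Suc: "(\<forall>i\<le>Suc n. P i) = (P 0 \<and> (\<forall>i\<le>n. P (Suc i)))"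
  by (metis Suc_le_mono le0 not0_implies_Suc)

lemma ok_char: "0 \<le> h \<Longrightarrow> ok h e w \<longleftrightarrow> (e = h + ht w \<and> (\<forall>i\<le>length w. 0 \<le> h + ht (take i w)))"
proof (induction w arbitrary: h)
  case Nil then show ?case by auto
next
  case (Cons a w)
  show ?case
  proof (cases a)
    case S
    have "ok h e (a # w) = ok (h + 1) e w" using S by simp
    also have "\<dots> = (e = h + 1 + ht w \<and> (\<forall>i\<le>length w. 0 \<le> h + 1 + ht (take i w)))"
      using Cons by simp
    finally show ?thesis using S Cons.prems by (simp only: length_Cons all_le_Suc) (simp add: algebra_simps)
  next
    case H
    show ?thesis
    proof (cases "h > 0")
      case True
      have "ok h e (a # w) = ok (h - 1) e w" using H True by simp
      also have "\<dots> = (e = h - 1 + ht w \<and> (\<forall>i\<le>length w. 0 \<le> h - 1 + ht (take i w)))"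
        using Cons True by simp
      finally show ?thesis using H Cons.prems True by (simp only: length_Cons all_le_Suc) (simp add: algebra_simps)
    next
      case False
      have "ht (take 0 w) = 0" by simp
      then show ?thesis using H Cons.prems False by (simp only: length_Cons all_le_Suc) force
    qed
  qed
qed

lemma dyck_ok: "dyck w \<longleftrightarrow> ok 0 0 w"
  unfolding dyck_def using ok_char[of 0 0 w] by (auto simp: ht_def)

definition gl :: "letter list \<Rightarrow> letter list \<Rightarrow> letter list" where
  "gl v u = v @ S # u @ [H]"

lemma ok_gl: "ok 0 0 v \<Longrightarrow> ok 0 0 u \<Longrightarrow> ok 0 0 (gl v u)"
proof -
  assume v: "ok 0 0 v" and u: "ok 0 0 u"
  have "ok 1 1 u" using ok_shift[OF u, of 1] by simp
  then have "ok 1 0 (u @ [H])" by (auto simp: ok_append)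
  then have "ok 0 0 (S # u @ [H])" by simp
  then show ?thesis using v unfolding gl_def by (auto simp: ok_append)
qed

lemma decomp: "\<forall>e. ok 0 e w \<longrightarrow> (0 < e \<longrightarrow> (\<exists>v u. w = v @ S # u \<and> ok 0 (e-1) v \<and> ok 0 0 u))
   \<and> (e = 0 \<longrightarrow> w \<noteq> [] \<longrightarrow> (\<exists>v u. w = gl v u \<and> ok 0 0 v \<and> ok 0 0 u))"
proof (induction w rule: length_induct)
  case (1 w)
  note IH = "1"[rule_format]
  show ?case
  proof (intro allI impI)
    fix e assume prem: "ok 0 e w"
    show "(0 < e \<longrightarrow> (\<exists>v u. w = v @ S # u \<and> ok 0 (e-1) v \<and> ok 0 0 u))
   \<and> (e = 0 \<longrightarrow> w \<noteq> [] \<longrightarrow> (\<exists>v u. w = gl v u \<and> ok 0 0 v \<and> ok 0 0 u))"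
    proof (cases w rule: rev_exhaust)
      case Nil then show ?thesis using prem by simp
    next
      case (snoc xs a)
      from prem snoc obtain m where m1: "ok 0 m xs" and m2: "ok m e [a]" by (auto simp: ok_append)
      have m0: "0 \<le> m" using ok_nonneg[OF m1] by simp
      show ?thesis
      proof (cases a)
        case S
        then have em: "e = m + 1" using m2 by simp
        show ?thesis
        proof (intro conjI impI)
          show "\<exists>v u. w = v @ S # u \<and> ok 0 (e-1) v \<and> ok 0 0 u"
            using m1 em snoc S by (intro exI[of _ xs] exI[of _ "[]"]) auto
        next
          assume "e = 0" then show "\<exists>v u. w = gl v u \<and> ok 0 0 v \<and> ok 0 0 u" using em m0 by simp
        qed
      next
        case H
        then have em: "m = e + 1" using m2 by auto
        have e0: "0 \<le> e" using ok_nonneg prem by auto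
        have "length xs < length w" using snoc by simp
        from IH[OF this, of "e+1"] m1 em e0 obtain v u where vu: "xs = v @ S # u" "ok 0 e v" "ok 0 0 u" by auto
        have w: "w = gl v u" using snoc H vu by (simp add: gl_def)
        show ?thesis
        proof (intro conjI impI)
          assume "0 < e"
          have "length v < length w" using w by (simp add: gl_def)
          from IH[OF this, of e] vu(2) \<open>0<e\<close> obtain v' u' where vv: "v = v' @ S # u'" "ok 0 (e-1) v'" "ok 0 0 u'" by auto
          then show "\<exists>v u. w = v @ S # u \<and> ok 0 (e-1) v \<and> ok 0 0 u"
            using w vu ok_gl[of u' u] by (intro exI[of _ v'] exI[of _ "gl u' u"]) (auto simp: gl_def)
        next
          assume "e = 0" "w \<noteq> []"
          then show "\<exists>v u. w = gl v u \<and> ok 0 0 v \<and> ok 0 0 u" using w vu by auto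
        qed
      qed
    qed
  qed
qed

lemma decomp0: "ok 0 0 w \<Longrightarrow> w \<noteq> [] \<Longrightarrow> \<exists>v u. w = gl v u \<and> ok 0 0 v \<and> ok 0 0 u"
  using decomp[of w] by blast

lemma no_cross: "ok 0 0 v \<Longrightarrow> ok 0 0 (v @ S # t) \<Longrightarrow> ok 0 0 (t @ S # u) \<Longrightarrow> False"
proof -
  assume a1: "ok 0 0 v" and a2: "ok 0 0 (v @ S # t)" and a3: "ok 0 0 (t @ S # u)"
  from a2 obtain m where "ok 0 m v" "ok m 0 (S # t)" by (auto simp: ok_append)
  moreover have "m = 0" using ok_ht[OF a1] ok_ht[OF \<open>ok 0 m v\<close>] by simp
  ultimately have "ok 1 0 t" by simp
  then have t: "ht t = -1" using ok_ht by fastforce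
  from a3 obtain m' where "ok 0 m' t" by (auto simp: ok_append)
  then show False using ok_ht[OF \<open>ok 0 m' t\<close>] ok_nonneg[OF \<open>ok 0 m' t\<close>] t by simp
qed

lemma gl_inj: "ok 0 0 v \<Longrightarrow> ok 0 0 u \<Longrightarrow> ok 0 0 v' \<Longrightarrow> ok 0 0 u' \<Longrightarrow> gl v u = gl v' u' \<Longrightarrow> v = v' \<and> u = u'"
proof -
  assume v: "ok 0 0 v" and u: "ok 0 0 u" and v': "ok 0 0 v'" and u': "ok 0 0 u'" and eq: "gl v u = gl v' u'"
  from eq obtain us where
    "(v = v' @ us \<and> us @ S # u @ [H] = S # u' @ [H]) \<or> (v @ us = v' \<and> S # u @ [H] = us @ S # u' @ [H])"
    unfolding gl_def using append_eq_append_conv2[of v "S # u @ [H]" v' "S # u' @ [H]"] by auto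
  then show ?thesis
  proof
    assume c: "v = v' @ us \<and> us @ S # u @ [H] = S # u' @ [H]"
    show ?thesis
    proof (cases us)
      case Nil then show ?thesis using c by simp
    next
      case (Cons a t)
      then have "a = S" "(t @ S # u) @ [H] = u' @ [H]" using c by auto
      then have "u' = t @ S # u" by (simp only: append1_eq_conv)
      then show ?thesis using no_cross[of v' t u] v' v u' c Cons \<open>a = S\<close> by simp
    qed
  next
    assume c: "v @ us = v' \<and> S # u @ [H] = us @ S # u' @ [H]"
    show ?thesis
    proof (cases us)
      case Nil then show ?thesis using c by simp
    next
      case (Cons a t)
      then have "a = S" "(t @ S # u') @ [H] = u @ [H]" using c by auto
      then have "u = t @ S # u'" by (simp only: append1_eq_conv)
      then show ?thesis using no_cross[of v t u'] v' v u c Cons \<open>a = S\<close> by simp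
    qed
  qed
qed

lemma tw: "\<not> P y \<Longrightarrow> takeWhile P (xs @ y # ys) = takeWhile P xs"
  by (induction xs) auto

lemma run_gl: "final_H_run (gl v u) = Suc (final_H_run u)"
  unfolding final_H_run_def gl_def by (simp add: tw)

lemma run_hh: "final_H_run (S # S # w @ [H]) = Suc (final_H_run w)"
  unfolding final_H_run_def by (simp add: tw)

lemma even_ok: "ok 0 0 w \<Longrightarrow> length w = 2 * nS w"
  using ok_ht[of 0 0 w] length_nS_nH[of w] by (simp add: ht_def)

lemma len_gl: "ok 0 0 v \<Longrightarrow> ok 0 0 u \<Longrightarrow> length (gl v u) div 2 = Suc (length v div 2 + length u div 2)"
  using even_ok[of v] even_ok[of u] by (simp add: gl_def)


definition wt :: "real \<Rightarrow> letter list \<Rightarrow> real" where "wt x w = x ^ (length w div 2)"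
definition Dy :: "letter list set" where "Dy = {w. ok 0 0 w}"
definition Dr :: "nat \<Rightarrow> letter list set" where "Dr j = {w. ok 0 0 w \<and> final_H_run w = j}"
definition Dn :: "nat \<Rightarrow> letter list set" where "Dn n = {w. ok 0 0 w \<and> length w \<le> 2 * n}"

lemma wt_gl: "ok 0 0 v \<Longrightarrow> ok 0 0 u \<Longrightarrow> wt x (gl v u) = x * wt x v * wt x u"
  by (simp add: wt_def len_gl power_add)

lemma wt_nonneg: "0 \<le> x \<Longrightarrow> 0 \<le> wt x w" by (simp add: wt_def)

lemma has_sum_prod:
  fixes f g :: "'a \<Rightarrow> real"
  assumes "(f has_sum a) A" "(g has_sum b) B" "\<And>x. x \<in> A \<Longrightarrow> 0 \<le> f x" "\<And>y. y \<in> B \<Longrightarrow> 0 \<le> g y"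
  shows "((\<lambda>(x,y). f x * g y) has_sum (a * b)) (A \<times> B)"
proof -
  have 1: "\<And>x. x \<in> A \<Longrightarrow> ((\<lambda>y. (\<lambda>(x,y). f x * g y) (x, y)) has_sum (f x * b)) B"
    using has_sum_cmult_right[OF assms(2)] by simp
  have 2: "((\<lambda>x. f x * b) has_sum (a * b)) A" using has_sum_cmult_left[OF assms(1)] by simp
  have 3: "(\<lambda>(x,y). f x * g y) summable_on Sigma A (\<lambda>_. B)"
    by (rule summable_on_SigmaI[OF 1]) (use 2 assms in \<open>auto simp: summable_on_def\<close>)
  show ?thesis using has_sum_SigmaI[OF 1 2 3] by simp
qed

lemma Dy_decomp: "Dy = insert [] ((\<lambda>(v,u). gl v u) ` (Dy \<times> Dy))"
proof
  show "Dy \<subseteq> insert [] ((\<lambda>(v,u). gl v u) ` (Dy \<times> Dy))"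
  proof
    fix w assume w: "w \<in> Dy"
    show "w \<in> insert [] ((\<lambda>(v,u). gl v u) ` (Dy \<times> Dy))"
    proof (cases "w = []")
      case False
      have "ok 0 0 w" using w by (simp add: Dy_def)
      then obtain v u where "w = gl v u" "ok 0 0 v" "ok 0 0 u" using decomp0 False by blast
      then show ?thesis by (auto simp: Dy_def image_iff intro!: bexI[of _ "(v,u)"])
    qed simp
  qed
next
  show "insert [] ((\<lambda>(v,u). gl v u) ` (Dy \<times> Dy)) \<subseteq> Dy"
    using ok_gl by (auto simp: Dy_def)
qed

lemma nil_notin: "[] \<notin> (\<lambda>(v,u). gl v u) ` A" by (auto simp: gl_def)

lemma inj_gl: "A \<subseteq> Dy \<Longrightarrow> B \<subseteq> Dy \<Longrightarrow> inj_on (\<lambda>(v,u). gl v u) (A \<times> B)"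
proof (rule inj_onI)
  fix a b assume A: "A \<subseteq> Dy" "B \<subseteq> Dy" and ab: "a \<in> A \<times> B" "b \<in> A \<times> B"
    and eq: "(\<lambda>(v,u). gl v u) a = (\<lambda>(v,u). gl v u) b"
  obtain v u v' u' where "a = (v,u)" "b = (v',u')" by fastforce
  then show "a = b" using gl_inj[of v u v' u'] A ab eq by (auto simp: Dy_def)
qed

lemma Dr0: "Dr 0 = {[]}"
proof
  show "Dr 0 \<subseteq> {[]}"
  proof
    fix w assume w: "w \<in> Dr 0"
    show "w \<in> {[]}"
    proof (rule ccontr)
      assume "w \<notin> {[]}"
      moreover have "ok 0 0 w" using w by (simp add: Dr_def)
      ultimately obtain v u where "w = gl v u" using decomp0 by blast
      then show False using w run_gl by (simp add: Dr_def)
    qed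
  qed
qed (auto simp: Dr_def final_H_run_def)

lemma Dr_Suc: "Dr (Suc j) = (\<lambda>(v,u). gl v u) ` (Dy \<times> Dr j)"
proof
  show "Dr (Suc j) \<subseteq> (\<lambda>(v,u). gl v u) ` (Dy \<times> Dr j)"
  proof
    fix w assume w: "w \<in> Dr (Suc j)"
    then have "w \<noteq> []" by (auto simp: Dr_def final_H_run_def)
    moreover have "ok 0 0 w" using w by (simp add: Dr_def)
    ultimately obtain v u where "w = gl v u" "ok 0 0 v" "ok 0 0 u" using decomp0 by blast
    then show "w \<in> (\<lambda>(v,u). gl v u) ` (Dy \<times> Dr j)" using w run_gl
      by (auto simp: Dr_def Dy_def image_iff intro!: bexI[of _ "(v,u)"])
  qed
next
  show "(\<lambda>(v,u). gl v u) ` (Dy \<times> Dr j) \<subseteq> Dr (Suc j)"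
    using ok_gl run_gl by (auto simp: Dr_def Dy_def)
qed

lemma finite_Dn: "finite (Dn n)"
proof -
  have "Dn n \<subseteq> {xs. set xs \<subseteq> {S, H} \<and> length xs \<le> 2 * n}"
    unfolding Dn_def using letter.exhaust by blast
  then show ?thesis using finite_lists_length_le[of "{S,H}" "2*n"] finite_subset by blast
qed

lemma Dn_Suc: "Dn (Suc n) \<subseteq> insert [] ((\<lambda>(v,u). gl v u) ` (Dn n \<times> Dn n))"
proof
  fix w assume w: "w \<in> Dn (Suc n)"
  show "w \<in> insert [] ((\<lambda>(v,u). gl v u) ` (Dn n \<times> Dn n))"
  proof (cases "w = []")
    case False
    moreover have "ok 0 0 w" using w by (simp add: Dn_def)
    ultimately obtain v u where "w = gl v u" "ok 0 0 v" "ok 0 0 u" using decomp0 by blast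
    then show ?thesis using w by (auto simp: Dn_def gl_def image_iff intro!: bexI[of _ "(v,u)"])
  qed simp
qed

lemma Dn_bound:
  fixes p q :: real
  assumes "0 < p" "0 \<le> q" "p + q = 1"
  shows "sum (wt (p*q)) (Dn n) \<le> 1 / p"
proof (induction n)
  case 0
  have "Dn 0 = {[]}" by (auto simp: Dn_def)
  then show ?case using assms by (simp add: wt_def field_simps)
next
  case (Suc n)
  let ?x = "p * q"
  let ?s = "sum (wt ?x) (Dn n)"
  let ?I = "(\<lambda>(v,u). gl v u) ` (Dn n \<times> Dn n)"
  have x0: "0 \<le> ?x" using assms by simp
  have fI: "finite ?I" using finite_Dn by simp
  have s0: "0 \<le> ?s" using x0 by (simp add: sum_nonneg wt_nonneg)
  have "sum (wt ?x) (Dn (Suc n)) \<le> sum (wt ?x) (insert [] ?I)"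
    by (rule sum_mono2) (use fI Dn_Suc wt_nonneg x0 in auto)
  also have "\<dots> \<le> 1 + sum (wt ?x) ?I"
    using fI by (simp add: sum.insert_if wt_def wt_nonneg x0 sum_nonneg)
  also have "sum (wt ?x) ?I \<le> sum (wt ?x \<circ> (\<lambda>(v,u). gl v u)) (Dn n \<times> Dn n)"
    by (rule sum_image_le) (use finite_Dn wt_nonneg x0 in auto)
  also have "\<dots> = (\<Sum>(v,u)\<in>Dn n \<times> Dn n. ?x * (wt ?x v * wt ?x u))"
    by (rule sum.cong) (auto simp: Dn_def wt_gl)
  also have "\<dots> = ?x * (\<Sum>v\<in>Dn n. \<Sum>u\<in>Dn n. wt ?x v * wt ?x u)"
    by (simp add: sum.cartesian_product[symmetric] sum_distrib_left)
  also have "\<dots> = ?x * (?s * ?s)"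
    by (simp add: sum_product)
  also have "\<dots> \<le> ?x * ((1/p) * (1/p))"
    using Suc.IH s0 x0 assms by (intro mult_left_mono mult_mono) auto
  finally have "sum (wt ?x) (Dn (Suc n)) \<le> 1 + ?x * ((1/p) * (1/p))" by simp
  also have "1 + ?x * ((1/p) * (1/p)) = 1 / p" using assms by (simp add: field_simps)
  finally show ?case .
qed


lemma summable_Dy:
  fixes p q :: real
  assumes "0 < p" "0 \<le> q" "p + q = 1"
  shows "wt (p*q) summable_on Dy" "infsum (wt (p*q)) Dy \<le> 1/p"
proof -
  have x0: "0 \<le> p * q" using assms by simp
  have bd: "sum (wt (p*q)) F \<le> 1/p" if F: "F \<in> {F. F \<subseteq> Dy \<and> finite F}" for F
  proof -
    let ?N = "sum length F"
    have "F \<subseteq> Dn ?N"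
    proof
      fix w assume "w \<in> F"
      then have "length w \<le> ?N" using F member_le_sum[of w F length] by auto
      then show "w \<in> Dn ?N" using \<open>w \<in> F\<close> F by (auto simp: Dn_def Dy_def)
    qed
    then have "sum (wt (p*q)) F \<le> sum (wt (p*q)) (Dn ?N)"
      by (rule sum_mono2[OF finite_Dn]) (simp add: wt_nonneg x0)
    also have "\<dots> \<le> 1/p" by (rule Dn_bound[OF assms])
    finally show ?thesis .
  qed
  have bdd: "bdd_above (sum (wt (p*q)) ` {F. F \<subseteq> Dy \<and> finite F})"
    using bd by (intro bdd_aboveI2) auto
  show "wt (p*q) summable_on Dy"
    by (rule nonneg_bdd_above_summable_on[OF _ bdd]) (simp add: wt_nonneg x0)
  have "infsum (wt (p*q)) Dy = (SUP F\<in>{F. finite F \<and> F\<subseteq>Dy}. sum (wt (p*q)) F)"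
    by (rule nonneg_bdd_above_infsum[OF _ bdd]) (simp add: wt_nonneg x0)
  also have "\<dots> \<le> 1/p"
    by (rule cSUP_least) (use bd in auto)
  finally show "infsum (wt (p*q)) Dy \<le> 1/p" .
qed

lemma prod_sum:
  assumes x0: "0 \<le> x" and a: "(wt x has_sum a) A" "A \<subseteq> Dy" and b: "(wt x has_sum b) B" "B \<subseteq> Dy"
  shows "(wt x has_sum (x * a * b)) ((\<lambda>(v,u). gl v u) ` (A \<times> B))"
proof -
  have 1: "((\<lambda>v. x * wt x v) has_sum (x * a)) A" by (rule has_sum_cmult_right[OF a(1)])
  have 2: "((\<lambda>(v,u). (x * wt x v) * wt x u) has_sum (x * a * b)) (A \<times> B)"
    by (rule has_sum_prod[OF 1 b(1)]) (auto simp: wt_nonneg x0)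
  have 3: "((wt x \<circ> (\<lambda>(v,u). gl v u)) has_sum (x * a * b)) (A \<times> B)"
    using 2 a(2) b(2) by (subst has_sum_cong[where g = "\<lambda>(v,u). (x * wt x v) * wt x u"])
      (auto simp: wt_gl Dy_def subset_iff)
  show ?thesis using 3 has_sum_reindex[OF inj_gl[OF a(2) b(2)]] by blast
qed

lemma main_values:
  fixes p q :: real
  assumes "0 < q" "q < p" "p + q = 1"
  shows "infsum (wt (p*q)) Dy = 1/p" "infsum (wt (p*q)) (Dr j) = q ^ j"
proof -
  let ?x = "p * q"
  define F where "F = infsum (wt ?x) Dy"
  have x0: "0 \<le> ?x" using assms by simp
  have p0: "0 < p" using assms by simp
  have sm: "wt ?x summable_on Dy" and Fle: "F \<le> 1/p" using summable_Dy[OF p0 _ assms(3)] assms F_def by auto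
  have hF: "(wt ?x has_sum F) Dy" using sm F_def by simp
  have "(wt ?x has_sum (wt ?x [] + ?x * F * F)) (insert [] ((\<lambda>(v,u). gl v u) ` (Dy \<times> Dy)))"
    by (rule has_sum_insert[OF nil_notin prod_sum[OF x0 hF _ hF]]) auto
  then have "(wt ?x has_sum (1 + ?x * F * F)) Dy" using Dy_decomp by (simp add: wt_def)
  then have Feq: "F = 1 + ?x * F * F" using has_sum_unique hF by blast
  have "(p * F - 1) * (q * F - 1) = ?x * F * F - (p + q) * F + 1" by (simp add: algebra_simps)
  also have "\<dots> = 0" using Feq assms(3) by simp
  finally have "(p * F - 1) * (q * F - 1) = 0" .
  moreover have "q * F \<noteq> 1"
  proof
    assume "q * F = 1"
    then have "F = 1 / q" using assms by (simp add: field_simps)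
    moreover have "1 / p < 1 / q" using assms by (simp add: frac_less2)
    ultimately show False using Fle by simp
  qed
  ultimately have "p * F = 1" by simp
  then have F1: "F = 1 / p" using p0 by (simp add: field_simps)
  then show "infsum (wt (p*q)) Dy = 1/p" using F_def by simp
  have Drsub: "Dr j \<subseteq> Dy" for j by (auto simp: Dr_def Dy_def)
  have "(wt ?x has_sum (?x * F) ^ j) (Dr j)" for j
  proof (induction j)
    case 0
    have "(wt ?x has_sum sum (wt ?x) {[]}) {[]}" by (rule has_sum_finite) simp
    moreover have "wt ?x [] = 1" by (simp add: wt_def)
    ultimately show ?case by (simp add: Dr0)
  next
    case (Suc j)
    have "(wt ?x has_sum (?x * F * (?x * F) ^ j)) ((\<lambda>(v,u). gl v u) ` (Dy \<times> Dr j))"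
      by (rule prod_sum[OF x0 hF _ Suc Drsub]) auto
    then show ?case using Dr_Suc by (simp add: mult.assoc)
  qed
  moreover have "?x * F = q" using F1 p0 by simp
  ultimately show "infsum (wt (p*q)) (Dr j) = q ^ j" by (metis infsumI)
qed


theorem lemma3:
  fixes p q :: real and k :: nat
  assumes "0 < q" "q < p" "p + q = 1" "k \<ge> 1"
  shows "(\<Sum>\<^sub>\<infinity>c\<in>{c\<in>SS_cycles. final_H_run c = k}. cycle_prob p q c)
           / (\<Sum>\<^sub>\<infinity>c\<in>SS_cycles. cycle_prob p q c) = p * q ^ (k - 1)"
proof -
  define hh :: "letter list \<Rightarrow> letter list" where "hh w = [S,S] @ w @ [H]" for w
  have inj: "inj_on hh A" for A by (rule inj_onI) (simp add: hh_def)
  have cp: "cycle_prob p q (hh w) = q^2 * p * wt (p*q) w" for w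
    by (simp add: cycle_prob_def wt_def hh_def)
  have isum: "(\<Sum>\<^sub>\<infinity>c\<in>hh ` A. cycle_prob p q c) = q^2 * p * infsum (wt (p*q)) A" for A
  proof -
    have "(\<Sum>\<^sub>\<infinity>c\<in>hh ` A. cycle_prob p q c) = infsum (cycle_prob p q \<circ> hh) A"
      by (rule infsum_reindex[OF inj])
    also have "\<dots> = infsum (\<lambda>w. q^2 * p * wt (p*q) w) A" by (simp add: cp o_def)
    also have "\<dots> = q^2 * p * infsum (wt (p*q)) A" by (rule infsum_cmult_right')
    finally show ?thesis .
  qed
  have SSeq: "SS_cycles = hh ` Dy"
    by (auto simp: SS_cycles_def hh_def Dy_def dyck_ok)
  have SSk: "{c\<in>SS_cycles. final_H_run c = k} = hh ` Dr (k - 1)"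
    using assms(4) by (auto simp: SSeq Dr_def Dy_def hh_def[abs_def] run_hh)
  have c0: "q^2 * p \<noteq> 0" using assms by simp
  have p0: "p \<noteq> 0" using assms by simp
  have num: "(\<Sum>\<^sub>\<infinity>c\<in>{c\<in>SS_cycles. final_H_run c = k}. cycle_prob p q c) = q^2 * p * q ^ (k - 1)"
    by (simp only: SSk isum main_values[OF assms(1-3)])
  have den: "(\<Sum>\<^sub>\<infinity>c\<in>SS_cycles. cycle_prob p q c) = q^2 * p * (1 / p)"
    by (simp only: SSeq isum main_values[OF assms(1-3)])
  show ?thesis
    unfolding num den using c0 p0 by (simp add: field_simps)
qed

end
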